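(* Let $X$ be a tropical hypersurface in $\mathbb{R}^n$, $n>3$, with dual subdivision $S_X$ of its Newton polytope $\Delta$. Let $\delta_1,\dots,\delta_k$ be all the $n$-dimensional polytopes of $S_X$ other than simplices, ordered in any way. Then $$rk(X)\le\#Vert(S_X)-1-\sum_{i=1}^{k}\Big(\#\Big(Vert(\delta_i)\setminus\bigcup_{j<i}Vert(\delta_j)\Big)-n+\dim\mathrm{ConvHull}\Big(Vert(\delta_i)\cap\bigcup_{j<i}Vert(\delta_j)\Big)\Big),$$ with the convention that the convex hull of the empty set has dimension $-1$.
   Context: A tropical hypersurface $X\subset\mathbb{R}^n$ is the corner locus of a tropical polynomial $N(x)=\max_{\omega\in\Delta\cap\mathbb{Z}^n}(\langle\omega,x\rangle+c_\omega)$, where $\Delta$ is its Newton polytope; $S_X$ is the dual subdivision (the regular subdivision of $\Delta$ induced by $\omega\mapsto c_\omega$), $Vert(S_X)$ its vertex set and $Vert(\delta)$ the vertex set of a cell $\delta$. The rank $rk(X)$ is the dimension of the space of tropical hypersurfaces with the same dual subdivision, i.e. of the set of vectors $(c_\omega)_{\omega\in Vert(S_X)}$, modulo adding a common constant, inducing exactly $S_X$. *)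

theory Defs
  imports "HOL-Analysis.Analysis" "HOL-Library.Function_Algebras"
begin

text \<open>A tropical polynomial in n variables is given by a finite nonempty support
  A of integer points of R^n (the monomials with finite coefficient) together with
  coefficients c.\<close>

definition lattice_points :: "(real^'n) set" where
  "lattice_points = {w. \<forall>i. w $ i \<in> \<int>}"

definition trop_eval :: "(real^'n) set \<Rightarrow> (real^'n \<Rightarrow> real) \<Rightarrow> real^'n \<Rightarrow> real" where
  "trop_eval A c x = Max ((\<lambda>w. w \<bullet> x + c w) ` A)"

definition trop_argmax :: "(real^'n) set \<Rightarrow> (real^'n \<Rightarrow> real) \<Rightarrow> real^'n \<Rightarrow> (real^'n) set" where
  "trop_argmax A c x = {w \<in> A. w \<bullet> x + c w = trop_eval A c x}"

definition trop_hypersurface :: "(real^'n) set \<Rightarrow> (real^'n \<Rightarrow> real) \<Rightarrow> (real^'n) set" where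
  "trop_hypersurface A c = {x. card (trop_argmax A c x) \<ge> 2}"

definition dual_cells :: "(real^'n) set \<Rightarrow> (real^'n \<Rightarrow> real) \<Rightarrow> (real^'n) set set" where
  "dual_cells A c = {convex hull (trop_argmax A c x) | x. True}"

definition subdiv_vertices :: "(real^'n) set \<Rightarrow> (real^'n \<Rightarrow> real) \<Rightarrow> (real^'n) set" where
  "subdiv_vertices A c = {w. {w} \<in> dual_cells A c}"

definition poly_vertices :: "(real^'n) set \<Rightarrow> (real^'n) set" where
  "poly_vertices P = {v. v extreme_point_of P}"

text \<open>Coefficient vectors (c'_w) indexed by Vert(S_X), encoded as functions vanishing
  outside Vert(S_X), which induce exactly the subdivision S_X.\<close>
definition same_subdiv_coeffs :: "(real^'n) set \<Rightarrow> (real^'n \<Rightarrow> real) \<Rightarrow> (real^'n \<Rightarrow> real) set" where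
  "same_subdiv_coeffs A c =
     {c'. (\<forall>w. w \<notin> subdiv_vertices A c \<longrightarrow> c' w = 0) \<and>
          dual_cells (subdiv_vertices A c) c' = dual_cells A c}"

definition fun_scale :: "real \<Rightarrow> ('a \<Rightarrow> real) \<Rightarrow> 'a \<Rightarrow> real" where
  "fun_scale r f = (\<lambda>x. r * f x)"

text \<open>Rank: the dimension of the set of such coefficient vectors (dimension of its
  affine hull, i.e. of the linear span of its differences), minus 1 for the
  quotient by adding a common constant.\<close>
definition trop_rank :: "(real^'n) set \<Rightarrow> (real^'n \<Rightarrow> real) \<Rightarrow> int" where
  "trop_rank A c =
     int (vector_space.dim fun_scale
            {f - g | f g. f \<in> same_subdiv_coeffs A c \<and> g \<in> same_subdiv_coeffs A c}) - 1"

end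

theory Submission
  imports Defs
begin


interpretation fs: vector_space "fun_scale :: real \<Rightarrow> ('a \<Rightarrow> real) \<Rightarrow> _"
  by unfold_locales (auto simp: fun_scale_def fun_eq_iff algebra_simps)

lemma sum_fun_eval: "finite K \<Longrightarrow> (\<Sum>k\<in>K. (f k :: 'a \<Rightarrow> real)) w = (\<Sum>k\<in>K. f k w)"
  by (induction K rule: finite_induct) auto

lemma dim_le_restrict:
  fixes W D :: "('a \<Rightarrow> real) set" and K :: "'a set"
  assumes DW: "D \<subseteq> W" and sub: "fs.subspace W" and fK: "finite K"
    and inj: "\<And>g. g \<in> W \<Longrightarrow> (\<forall>k\<in>K. g k = 0) \<Longrightarrow> g = 0"
  shows "fs.dim D \<le> card K"
proof -
  obtain B where B: "B \<subseteq> fs.span D" "fs.independent B" "fs.span D \<subseteq> fs.span B" "card B = fs.dim (fs.span D)"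
    using fs.basis_exists by blast
  have spB: "fs.span B = fs.span D"
    using B by (metis fs.span_mono fs.span_span order_antisym)
  have spW: "fs.span D \<subseteq> W" using fs.span_minimal[OF DW sub] .
  define r where "r g = (\<lambda>w. if w \<in> K then g w else 0)" for g :: "'a \<Rightarrow> real"
  have hom: "module_hom fun_scale fun_scale r"
    by unfold_locales (auto simp: r_def fun_scale_def fun_eq_iff algebra_simps)
  have injr: "inj_on r (fs.span B)"
  proof (rule inj_onI)
    fix x y assume xy: "x \<in> fs.span B" "y \<in> fs.span B" "r x = r y"
    have "x - y \<in> W" using xy spB spW fs.subspace_diff[OF sub] by blast
    moreover have "\<forall>k\<in>K. (x - y) k = 0" using xy(3) unfolding r_def fun_eq_iff
      by (metis diff_self minus_apply)
    ultimately have "x - y = 0" using inj by blast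
    then show "x = y" by simp
  qed
  have ind: "fs.independent (r ` B)"
    using module_hom.independent_injective_image[OF hom B(2) injr] .
  define e where "e k = (\<lambda>w. if w = k then 1 else 0 :: real)" for k :: 'a
  have "r ` B \<subseteq> fs.span (e ` K)"
  proof
    fix g assume "g \<in> r ` B"
    then obtain h where g: "g = r h" by blast
    have "g = (\<Sum>k\<in>K. fun_scale (g k) (e k))"
      using fK by (auto simp: fun_eq_iff sum_fun_eval fun_scale_def e_def g r_def if_distrib sum.delta cong: if_cong)
    also have "\<dots> \<in> fs.span (e ` K)"
      by (intro fs.span_sum fs.span_scale fs.span_base) auto
    finally show "g \<in> fs.span (e ` K)" .
  qed
  then have "card (r ` B) \<le> card (e ` K)"
    using fs.independent_span_bound[OF _ ind] fK by blast
  also have "\<dots> \<le> card K" using fK card_image_le by blast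
  finally have "card (r ` B) \<le> card K" .
  moreover have "card (r ` B) = card B"
    using injr card_image inj_on_subset fs.span_superset by metis
  ultimately show ?thesis using B(4) by simp
qed



lemma vertex_in_V:
  fixes A :: "(real^'n) set"
  assumes fA: "finite A" and ext: "w extreme_point_of convex hull (trop_argmax A c x)"
  shows "w \<in> subdiv_vertices A c"
proof -
  define P where "P = trop_argmax A c x"
  define M where "M = trop_eval A c x"
  have PA: "P \<subseteq> A" by (auto simp: P_def trop_argmax_def)
  have wP: "w \<in> P" using ext extreme_point_of_convex_hull P_def by blast
  have Pval: "\<And>p. p \<in> P \<Longrightarrow> p \<bullet> x + c p = M" by (auto simp: P_def M_def trop_argmax_def)
  have Mge: "\<And>q. q \<in> A \<Longrightarrow> q \<bullet> x + c q \<le> M"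
    unfolding M_def trop_eval_def using fA by (intro Max_ge) auto
  have notP: "\<And>q. q \<in> A - P \<Longrightarrow> q \<bullet> x + c q < M"
    using Mge by (fastforce simp: P_def M_def trop_argmax_def order_le_less)
  have cv: "convex (convex hull P - {w})"
    using ext extreme_point_of_stillconvex[of "convex hull P" w] P_def by auto
  have "convex hull (P - {w}) \<subseteq> convex hull P - {w}"
    using hull_minimal[of "P - {w}" "convex hull P - {w}" convex] cv hull_subset[of P convex] by blast
  then have wnot: "w \<notin> convex hull (P - {w})" by blast
  have fP: "finite P" using PA fA finite_subset by blast
  have cl: "closed (convex hull (P - {w}))"
    using fP by (simp add: compact_imp_closed finite_imp_compact_convex_hull)
  then obtain u b where ub: "u \<bullet> w < b" "\<forall>y\<in>convex hull (P - {w}). u \<bullet> y > b"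
    using separating_hyperplane_closed_point[OF convex_convex_hull cl wnot] by auto
  have sep: "\<And>p. p \<in> P - {w} \<Longrightarrow> u \<bullet> w < u \<bullet> p"
    using ub hull_subset[of "P - {w}" convex] by (meson less_trans subsetD)
  have ev: "\<forall>\<^sub>F e in at_right (0::real). \<forall>q\<in>A - P. q \<bullet> x + c q - e * (u \<bullet> q) < M - e * (u \<bullet> w)"
  proof (rule eventually_ball_finite)
    show "finite (A - P)" using fA by simp
    show "\<forall>q\<in>A - P. \<forall>\<^sub>F e in at_right 0. q \<bullet> x + c q - e * (u \<bullet> q) < M - e * (u \<bullet> w)"
    proof
      fix q assume q: "q \<in> A - P"
      have "((\<lambda>e. (q \<bullet> x + c q - e * (u \<bullet> q)) - (M - e * (u \<bullet> w))) \<longlongrightarrow>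
              (q \<bullet> x + c q - 0 * (u \<bullet> q)) - (M - 0 * (u \<bullet> w))) (at_right 0)"
        by (intro tendsto_intros)
      then have "\<forall>\<^sub>F e in at_right 0. (q \<bullet> x + c q - e * (u \<bullet> q)) - (M - e * (u \<bullet> w)) < 0"
        using notP[OF q] by (intro order_tendstoD(2)) auto
      then show "\<forall>\<^sub>F e in at_right 0. q \<bullet> x + c q - e * (u \<bullet> q) < M - e * (u \<bullet> w)"
        by eventually_elim auto
    qed
  qed
  then have "\<forall>\<^sub>F e in at_right (0::real). 0 < e \<and> (\<forall>q\<in>A - P. q \<bullet> x + c q - e * (u \<bullet> q) < M - e * (u \<bullet> w))"
    using eventually_at_right_less eventually_conj by blast
  then obtain e where e: "0 < e" "\<forall>q\<in>A - P. q \<bullet> x + c q - e * (u \<bullet> q) < M - e * (u \<bullet> w)"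
    using eventually_happens trivial_limit_at_right_real by blast
  define x' where "x' = x - e *\<^sub>R u"
  have val: "\<And>q. q \<bullet> x' + c q = q \<bullet> x + c q - e * (u \<bullet> q)"
    by (simp add: x'_def inner_diff_right inner_commute)
  have less: "\<And>q. q \<in> A \<Longrightarrow> q \<noteq> w \<Longrightarrow> q \<bullet> x' + c q < w \<bullet> x' + c w"
  proof -
    fix q assume q: "q \<in> A" "q \<noteq> w"
    show "q \<bullet> x' + c q < w \<bullet> x' + c w"
    proof (cases "q \<in> P")
      case True
      then have "u \<bullet> w < u \<bullet> q" using sep q by blast
      then show ?thesis using Pval[OF True] Pval[OF wP] e(1) val[of q] val[of w]
        by (simp add: mult_strict_left_mono)
    next
      case False
      then have "q \<bullet> x + c q - e * (u \<bullet> q) < M - e * (u \<bullet> w)" using e(2) q by blast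
      then show ?thesis using Pval[OF wP] val[of q] val[of w] by linarith
    qed
  qed
  have wA: "w \<in> A" using wP PA by blast
  have teval: "trop_eval A c x' = w \<bullet> x' + c w"
    unfolding trop_eval_def using fA wA less
    by (intro Max_eqI) (auto, metis less_le order_refl)
  have "trop_argmax A c x' = {w}"
    unfolding trop_argmax_def teval using less wA by force
  then have "{w} \<in> dual_cells A c" unfolding dual_cells_def
    by (metis (mono_tags, lifting) convex_hull_singleton mem_Collect_eq)
  then show ?thesis by (simp add: subdiv_vertices_def)
qed



lemma exists_T:
  fixes Vt Ut :: "(real^'n) set"
  assumes fV: "finite Vt"
  shows "\<exists>T. \<not> affine_dependent T \<and> T \<subseteq> Vt \<and> affine hull T = affine hull Vt \<and>
     int (card (T \<inter> (Vt - Ut))) \<le> aff_dim Vt - aff_dim (convex hull (Vt \<inter> Ut))"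
proof -
  obtain S0 where S0: "\<not> affine_dependent S0" "S0 \<subseteq> Vt \<inter> Ut" "affine hull S0 = affine hull (Vt \<inter> Ut)"
    using extend_to_affine_basis[of "{}" "Vt \<inter> Ut"] by auto
  obtain T where T: "\<not> affine_dependent T" "S0 \<subseteq> T" "T \<subseteq> Vt" "affine hull T = affine hull Vt"
    using extend_to_affine_basis[of S0 Vt] S0 by auto
  have fT: "finite T" using T(3) fV finite_subset by blast
  have fS: "finite S0" using T(2) fT finite_subset by blast
  have cT: "int (card T) = aff_dim Vt + 1"
    using aff_dim_affine_independent[OF T(1)] aff_dim_affine_hull2[OF T(4)] by simp
  have cS: "int (card S0) = aff_dim (convex hull (Vt \<inter> Ut)) + 1"
    using aff_dim_affine_independent[OF S0(1)] aff_dim_affine_hull2[OF S0(3)] aff_dim_convex_hull[of "Vt \<inter> Ut"] by simp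
  have sub: "T \<inter> (Vt - Ut) \<subseteq> T - S0" using S0(2) by blast
  have "card (T \<inter> (Vt - Ut)) \<le> card (T - S0)" using card_mono[OF _ sub] fT by blast
  also have "card (T - S0) = card T - card S0" using card_Diff_subset[OF fS T(2)] .
  finally have "int (card (T \<inter> (Vt - Ut))) \<le> int (card T) - int (card S0)"
    using card_mono[OF fT T(2)] by linarith
  then show ?thesis using T cT cS by auto
qed

lemma affine_on_vertices:
  assumes "\<delta> \<in> dual_cells V f"
  shows "\<exists>a b. \<forall>w\<in>poly_vertices \<delta>. f w = a \<bullet> w + b"
proof -
  obtain x where d: "\<delta> = convex hull (trop_argmax V f x)" using assms by (auto simp: dual_cells_def)
  have "\<forall>w\<in>poly_vertices \<delta>. f w = (- x) \<bullet> w + trop_eval V f x"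
  proof
    fix w assume "w \<in> poly_vertices \<delta>"
    then have "w \<in> trop_argmax V f x" using d extreme_point_of_convex_hull by (auto simp: poly_vertices_def)
    then show "f w = (- x) \<bullet> w + trop_eval V f x" by (auto simp: trop_argmax_def inner_commute)
  qed
  then show ?thesis by blast
qed


theorem mainTheorem8:
  fixes A :: "(real^'n) set" and c :: "real^'n \<Rightarrow> real"
    and ds :: "(real^'n) set list"
  assumes "CARD('n) > 3"
    and "finite A" and "A \<noteq> {}" and "A \<subseteq> lattice_points"
    and "distinct ds"
    and "set ds = {\<delta> \<in> dual_cells A c. aff_dim \<delta> = int CARD('n) \<and> \<not> (int CARD('n) simplex \<delta>)}"
  shows "trop_rank A c \<le>
     int (card (subdiv_vertices A c)) - 1
     - (\<Sum>i<length ds.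
          int (card (poly_vertices (ds ! i) - (\<Union>j<i. poly_vertices (ds ! j))))
          - int CARD('n)
          + aff_dim (convex hull (poly_vertices (ds ! i) \<inter> (\<Union>j<i. poly_vertices (ds ! j)))))"
proof -
  note fA = assms(2) and setds = assms(6)
  define V where "V = subdiv_vertices A c"
  define m where "m = length ds"
  define vert where "vert i = poly_vertices (ds ! i)" for i
  define U where "U i = (\<Union>j<i. vert j)" for i
  define N where "N i = vert i - U i" for i
  have VA: "V \<subseteq> A"
  proof
    fix w assume "w \<in> V"
    then obtain x where "{w} = convex hull (trop_argmax A c x)"
      by (auto simp: V_def subdiv_vertices_def dual_cells_def)
    then have "trop_argmax A c x = {w}"
      by (metis convex_hull_eq_empty convex_hull_singleton hull_subset subset_singletonD)
    then show "w \<in> A" by (auto simp: trop_argmax_def)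
  qed
  have fV: "finite V" using VA fA finite_subset by blast
  have cell: "ds ! i \<in> dual_cells A c" "aff_dim (ds ! i) = int CARD('n)" if "i < m" for i
    using that setds nth_mem[of i ds] by (auto simp: m_def)
  have vfacts: "finite (vert i) \<and> vert i \<subseteq> V \<and> aff_dim (vert i) = int CARD('n)" if i: "i < m" for i
  proof -
    obtain x where d: "ds ! i = convex hull (trop_argmax A c x)"
      using cell(1)[OF i] by (auto simp: dual_cells_def)
    have sub: "vert i \<subseteq> trop_argmax A c x"
      using d extreme_point_of_convex_hull by (auto simp: vert_def poly_vertices_def)
    have "trop_argmax A c x \<subseteq> A" by (auto simp: trop_argmax_def)
    then have fP: "finite (trop_argmax A c x)" using fA finite_subset by blast
    have fin: "finite (vert i)" using sub fP finite_subset by blast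
    have inV: "vert i \<subseteq> V"
      using vertex_in_V[OF fA] d by (auto simp: vert_def poly_vertices_def V_def)
    have "ds ! i = convex hull (vert i)"
      unfolding vert_def poly_vertices_def using d fP
      by (metis Krein_Milman_Minkowski convex_convex_hull finite_imp_compact_convex_hull)
    then have "aff_dim (vert i) = aff_dim (ds ! i)" by (simp add: aff_dim_convex_hull)
    then show ?thesis using fin inV cell(2)[OF i] by simp
  qed
  have "\<forall>i. \<exists>T. i < m \<longrightarrow> (\<not> affine_dependent T \<and> T \<subseteq> vert i \<and> affine hull T = affine hull (vert i) \<and>
     int (card (T \<inter> (vert i - U i))) \<le> aff_dim (vert i) - aff_dim (convex hull (vert i \<inter> U i)))"
    using exists_T vfacts by blast
  then obtain T where T: "\<And>i. i < m \<Longrightarrow> \<not> affine_dependent (T i) \<and> T i \<subseteq> vert i \<and>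
     affine hull (T i) = affine hull (vert i) \<and>
     int (card (T i \<inter> N i)) \<le> aff_dim (vert i) - aff_dim (convex hull (vert i \<inter> U i))"
    unfolding N_def by metis
  define R where "R i = N i - T i" for i
  define K where "K = V - (\<Union>i<m. R i)"
  have RN: "R i \<subseteq> N i" for i by (auto simp: R_def)
  have NU: "N i \<inter> U i = {}" for i by (auto simp: N_def)
  have vU: "vert j \<subseteq> U i" if "j < i" for i j using that by (auto simp: U_def)
  have RV: "R i \<subseteq> V" if "i < m" for i using vfacts[OF that] RN by (auto simp: N_def)
  have fR: "finite (R i)" if "i < m" for i using RV[OF that] fV finite_subset by blast
  have disj: "R i \<inter> R j = {}" if "i \<noteq> j" for i j
  proof -
    { fix i j :: nat assume "i < j"
      then have "R i \<inter> R j = {}" using RN[of i] RN[of j] NU[of j] vU[of i j] by (auto simp: N_def) }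
    then show ?thesis using that by (metis Int_commute nat_neq_iff)
  qed
  have cardK: "int (card K) = int (card V) - (\<Sum>i<m. int (card (R i)))"
  proof -
    have cU: "card (\<Union>i<m. R i) = (\<Sum>i<m. card (R i))"
      by (rule card_UN_disjoint) (use fR disj in auto)
    have sU: "(\<Union>i<m. R i) \<subseteq> V" using RV by blast
    have "card K = card V - card (\<Union>i<m. R i)"
      unfolding K_def by (rule card_Diff_subset) (use sU fR in auto)
    moreover have "card (\<Union>i<m. R i) \<le> card V" using card_mono[OF fV sU] .
    ultimately show ?thesis using cU by (simp add: of_nat_diff of_nat_sum)
  qed
  have termR: "int (card (N i)) - int CARD('n) + aff_dim (convex hull (vert i \<inter> U i)) \<le> int (card (R i))"
    if i: "i < m" for i
  proof -
    have fN: "finite (N i)" using vfacts[OF i] by (auto simp: N_def)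
    have c1: "card (N i) = card (N i \<inter> T i) + card (R i)"
      using card_Int_Diff[OF fN, of "T i"] by (simp add: R_def)
    have c2: "T i \<inter> N i = N i \<inter> T i" by blast
    have c3: "int (card (T i \<inter> N i)) \<le> aff_dim (vert i) - aff_dim (convex hull (vert i \<inter> U i))"
      using T[OF i] by blast
    show ?thesis using c1 c2 c3 vfacts[OF i] by simp
  qed
  define W where "W = {g :: real^'n \<Rightarrow> real. (\<forall>w. w \<notin> V \<longrightarrow> g w = 0) \<and>
                        (\<forall>i<m. \<exists>a b. \<forall>w\<in>vert i. g w = a \<bullet> w + b)}"
  define D where "D = {f - g | f g. f \<in> same_subdiv_coeffs A c \<and> g \<in> same_subdiv_coeffs A c}"
  have subW: "fs.subspace W"
    unfolding fs.subspace_def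
  proof (intro conjI ballI allI)
    show "0 \<in> W" unfolding W_def by (auto intro!: exI[of _ 0])
  next
    fix x y assume xy: "x \<in> W" "y \<in> W"
    show "x + y \<in> W" unfolding W_def
    proof (intro CollectI conjI allI impI)
      fix i assume "i < m"
      then obtain a b a' b' where "\<forall>w\<in>vert i. x w = a \<bullet> w + b" "\<forall>w\<in>vert i. y w = a' \<bullet> w + b'"
        using xy unfolding W_def by blast
      then show "\<exists>a b. \<forall>w\<in>vert i. (x + y) w = a \<bullet> w + b"
        by (intro exI[of _ "a + a'"] exI[of _ "b + b'"]) (auto simp: inner_add_left)
    qed (use xy in \<open>auto simp: W_def\<close>)
  next
    fix r x assume x: "x \<in> W"
    show "fun_scale r x \<in> W" unfolding W_def
    proof (intro CollectI conjI allI impI)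
      fix i assume "i < m"
      then obtain a b where "\<forall>w\<in>vert i. x w = a \<bullet> w + b"
        using x unfolding W_def by blast
      then show "\<exists>a' b'. \<forall>w\<in>vert i. fun_scale r x w = a' \<bullet> w + b'"
        by (intro exI[of _ "r *\<^sub>R a"] exI[of _ "r * b"]) (auto simp: fun_scale_def algebra_simps)
    qed (use x in \<open>auto simp: W_def fun_scale_def\<close>)
  qed
  have DW: "D \<subseteq> W"
  proof
    fix h assume "h \<in> D"
    then obtain f g where h: "h = f - g" and fg: "f \<in> same_subdiv_coeffs A c" "g \<in> same_subdiv_coeffs A c"
      unfolding D_def by blast
    show "h \<in> W" unfolding W_def
    proof (intro CollectI conjI allI impI)
      fix w assume "w \<notin> V" then show "h w = 0"
        using fg h by (auto simp: same_subdiv_coeffs_def V_def)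
    next
      fix i assume i: "i < m"
      have "ds ! i \<in> dual_cells V f" "ds ! i \<in> dual_cells V g"
        using fg cell(1)[OF i] by (auto simp: same_subdiv_coeffs_def V_def)
      then obtain a b a' b' where "\<forall>w\<in>vert i. f w = a \<bullet> w + b" "\<forall>w\<in>vert i. g w = a' \<bullet> w + b'"
        using affine_on_vertices unfolding vert_def by metis
      then show "\<exists>a b. \<forall>w\<in>vert i. h w = a \<bullet> w + b"
        by (intro exI[of _ "a - a'"] exI[of _ "b - b'"]) (auto simp: h inner_diff_left)
    qed
  qed
  have fK: "finite K" using fV by (simp add: K_def)
  have injK: "g = 0" if g: "g \<in> W" "\<forall>k\<in>K. g k = 0" for g
  proof -
    have Z: "i < m \<Longrightarrow> \<forall>w\<in>vert i. g w = 0" for i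
    proof (induction i rule: less_induct)
      case (less i)
      obtain a b where ab: "\<forall>w\<in>vert i. g w = a \<bullet> w + b" using g(1) less.prems unfolding W_def by blast
      have Ti: "\<not> affine_dependent (T i)" "T i \<subseteq> vert i" "affine hull (T i) = affine hull (vert i)"
        using T[OF less.prems] by auto
      have zT: "g t = 0" if t: "t \<in> T i" for t
      proof (cases "t \<in> V \<and> t \<notin> K")
        case False
        then show ?thesis using g unfolding W_def by blast
      next
        case True
        then obtain j where j: "j < m" "t \<in> R j" unfolding K_def by blast
        have "j < i"
        proof (rule ccontr)
          assume "\<not> j < i"
          then consider "j = i" | "i < j" by linarith
          then show False
          proof cases
            case 1 then show False using j t by (auto simp: R_def)
          next
            case 2 then show False using j t Ti(2) vU[of i j] RN[of j] NU[of j] by blast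
          qed
        qed
        then show ?thesis using less.IH[of j] j RN[of j] by (auto simp: N_def)
      qed
      have "T i \<subseteq> {y. a \<bullet> y = - b}" using zT ab Ti(2) by force
      then have "affine hull (T i) \<subseteq> {y. a \<bullet> y = - b}"
        using hull_minimal affine_hyperplane by blast
      then have "vert i \<subseteq> {y. a \<bullet> y = - b}" using Ti(3) hull_subset[of "vert i" affine] by blast
      then show ?case using ab by force
    qed
    show "g = 0"
    proof
      fix w show "g w = 0 w"
      proof (cases "w \<in> V \<and> w \<notin> K")
        case False then show ?thesis using g unfolding W_def by auto
      next
        case True
        then obtain j where j: "j < m" "w \<in> R j" unfolding K_def by blast
        then show ?thesis using Z[OF j(1)] RN[of j] by (auto simp: N_def)
      qed
    qed
  qed
  have dimD: "fs.dim D \<le> card K" using dim_le_restrict[OF DW subW fK injK] by blast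
  have rank: "trop_rank A c = int (fs.dim D) - 1" by (simp add: trop_rank_def D_def)
  have "(\<Sum>i<m. int (card (N i)) - int CARD('n) + aff_dim (convex hull (vert i \<inter> U i)))
          \<le> (\<Sum>i<m. int (card (R i)))" by (intro sum_mono termR) simp
  then show ?thesis using rank dimD cardK
    unfolding V_def[symmetric] m_def[symmetric] vert_def[symmetric] U_def[symmetric] N_def[symmetric]
    by linarith
qed

end
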